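(* Let $X=X(\Delta)$ be a smooth projective toric variety of dimension $n$ with rays $\rho_1,\dots,\rho_{n+r}$, and suppose there is a maximal cone $\sigma_0$ with $\sigma_0(1)=\{\rho_1,\dots,\rho_n\}$ such that $$\rho_{n+j}+\sum_{i=1}^n\mathfrak{b}_{i,j}\rho_i=0\qquad(1\le j\le r)$$ with all $\mathfrak{b}_{i,j}\in\mathbb{Z}_{\ge0}$; call this positive relation $\mathcal{P}_{n+j}$. Let $D=\sum_{i=1}^{n+r}\mathfrak{a}_iD_{\rho_i}$ with $L=\mathcal{O}_X(D)$ globally generated, and let $\beta$ be the minimal $L$-degree of centred primitive relations. Then for all $1\le i_0\le n$, $1\le j_0\le r$, $$\deg_L(\mathcal{P}_{n+j_0})=\mathfrak{a}_{n+j_0}+\sum_{i=1}^n\mathfrak{a}_i\mathfrak{b}_{i,j_0}\ge\mathfrak{b}_{i_0,j_0}\beta.$$ If $L$ is ample and there exists $i_0\in\{1,\dots,n\}$ such that $\rho_{i_0}$ belongs to no centred primitive collection of $L$-degree $\beta$, then for this $i_0$ and all $1\le j_0\le r$ the inequality is strict: $\mathfrak{a}_{n+j_0}+\sum_{i=1}^n\mathfrak{a}_i\mathfrak{b}_{i,j_0}>\mathfrak{b}_{i_0,j_0}\beta$. Likewise, if $L$ is ample and there exists $j_0\in\{1,\dots,r\}$ such that $\rho_{n+j_0}$ belongs to no centred primitive collection of $L$-degree $\beta$, then for this $j_0$ and all $1\le i_0\le n$ the inequality is strict.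
   Context: Rays are identified with primitive generators; $D_\rho$ is the torus-invariant divisor of $\rho$. For $D=\sum a_\rho D_\rho$, $\phi_D$ is the piecewise linear function equal on each maximal cone $\sigma$ to $\langle m_D(\sigma),\cdot\rangle$ with $\langle m_D(\sigma),\rho\rangle=-a_\rho$ for $\rho\in\sigma(1)$; the $L$-degree of a relation $\sum c_\rho\rho=0$ is $-\sum c_\rho\phi_D(\rho)$. A primitive collection is a set of rays not generating a cone of $\Delta$ while every proper subset does; it is centred if its elements sum to $0$, and $\sum_{\rho\in\mathcal{I}}\rho=0$ is then a centred primitive relation, whose $L$-degree is the $L$-degree of the collection. *)

theory Defs
  imports "HOL-Analysis.Analysis"
begin

text \<open>Lattice N = Z^n embedded in N_R = real^'n, n = CARD('n).
  Rays are indexed by 0..<Nr (paper's rho_{k+1} is ray k); v k is its primitive generator.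
  A smooth complete simplicial fan is given by its set M of maximal cones, each a set of ray indices.\<close>

definition lattice_pt :: "real^'n \<Rightarrow> bool" where
  "lattice_pt x \<longleftrightarrow> (\<forall>k. x $ k \<in> \<int>)"

definition cone_of :: "(nat \<Rightarrow> real^'n) \<Rightarrow> nat set \<Rightarrow> (real^'n) set" where
  "cone_of v S = {x. \<exists>c. (\<forall>i\<in>S. c i \<ge> 0) \<and> x = (\<Sum>i\<in>S. c i *\<^sub>R v i)}"

definition mD :: "(nat \<Rightarrow> real^'n) \<Rightarrow> nat set \<Rightarrow> (nat \<Rightarrow> int) \<Rightarrow> real^'n" where
  "mD v \<sigma> a = (THE m. \<forall>i\<in>\<sigma>. inner m (v i) = - of_int (a i))"

definition phiD :: "(nat \<Rightarrow> real^'n) \<Rightarrow> nat set set \<Rightarrow> (nat \<Rightarrow> int) \<Rightarrow> real^'n \<Rightarrow> real" where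
  "phiD v M a u = inner (mD v (SOME \<sigma>. \<sigma> \<in> M \<and> u \<in> cone_of v \<sigma>) a) u"

text \<open>O(D) globally generated / ample, via the standard criterion on the m_D(sigma)
  (Cox--Little--Schenck Thm 6.1.7, Lemma 6.1.13): D = sum a_k D_k.\<close>
definition globally_generated :: "nat \<Rightarrow> (nat \<Rightarrow> real^'n) \<Rightarrow> nat set set \<Rightarrow> (nat \<Rightarrow> int) \<Rightarrow> bool" where
  "globally_generated Nr v M a \<longleftrightarrow>
     (\<forall>\<sigma>\<in>M. \<forall>k<Nr. inner (mD v \<sigma> a) (v k) \<ge> - of_int (a k))"

definition ample :: "nat \<Rightarrow> (nat \<Rightarrow> real^'n) \<Rightarrow> nat set set \<Rightarrow> (nat \<Rightarrow> int) \<Rightarrow> bool" where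
  "ample Nr v M a \<longleftrightarrow>
     (\<forall>\<sigma>\<in>M. \<forall>k<Nr. k \<notin> \<sigma> \<longrightarrow> inner (mD v \<sigma> a) (v k) > - of_int (a k))"

definition smooth_projective_fan :: "nat \<Rightarrow> (nat \<Rightarrow> real^'n) \<Rightarrow> nat set set \<Rightarrow> bool" where
  "smooth_projective_fan Nr v M \<longleftrightarrow>
     inj_on v {..<Nr} \<and> (\<forall>k<Nr. lattice_pt (v k)) \<and>
     M \<noteq> {} \<and> \<Union>M = {..<Nr} \<and>
     (\<forall>\<sigma>\<in>M. \<sigma> \<subseteq> {..<Nr} \<and> card \<sigma> = CARD('n) \<and>
        (\<forall>x. lattice_pt x \<longrightarrow> (\<exists>c::nat \<Rightarrow> int. x = (\<Sum>i\<in>\<sigma>. of_int (c i) *\<^sub>R v i)))) \<and>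
     (\<forall>\<sigma>\<in>M. \<forall>\<tau>\<in>M. cone_of v \<sigma> \<inter> cone_of v \<tau> = cone_of v (\<sigma> \<inter> \<tau>)) \<and>
     (\<Union>\<sigma>\<in>M. cone_of v \<sigma>) = UNIV \<and>
     (\<exists>a'. ample Nr v M a')"

definition generates_cone :: "(nat \<Rightarrow> real^'n) \<Rightarrow> nat set set \<Rightarrow> nat set \<Rightarrow> bool" where
  "generates_cone v M S \<longleftrightarrow> (\<exists>\<sigma>\<in>M. \<exists>\<tau>. \<tau> \<subseteq> \<sigma> \<and> cone_of v S = cone_of v \<tau>)"

definition primitive_collection :: "nat \<Rightarrow> (nat \<Rightarrow> real^'n) \<Rightarrow> nat set set \<Rightarrow> nat set \<Rightarrow> bool" where
  "primitive_collection Nr v M I \<longleftrightarrow>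
     I \<subseteq> {..<Nr} \<and> \<not> generates_cone v M I \<and> (\<forall>J. J \<subset> I \<longrightarrow> generates_cone v M J)"

definition centred_primitive_collection :: "nat \<Rightarrow> (nat \<Rightarrow> real^'n) \<Rightarrow> nat set set \<Rightarrow> nat set \<Rightarrow> bool" where
  "centred_primitive_collection Nr v M I \<longleftrightarrow>
     primitive_collection Nr v M I \<and> (\<Sum>i\<in>I. v i) = 0"

definition Ldeg :: "nat \<Rightarrow> (nat \<Rightarrow> real^'n) \<Rightarrow> nat set set \<Rightarrow> (nat \<Rightarrow> int) \<Rightarrow> (nat \<Rightarrow> int) \<Rightarrow> real" where
  "Ldeg Nr v M a c = - (\<Sum>k<Nr. of_int (c k) * phiD v M a (v k))"

definition coll_rel :: "nat set \<Rightarrow> nat \<Rightarrow> int" where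
  "coll_rel I = (\<lambda>k. if k \<in> I then 1 else 0)"

text \<open>Coefficients of P_{n+j}: rho_{n+j} + sum_i b_{i,j} rho_i = 0 (0-based indices).\<close>
definition pos_rel :: "nat \<Rightarrow> (nat \<Rightarrow> nat \<Rightarrow> nat) \<Rightarrow> nat \<Rightarrow> nat \<Rightarrow> int" where
  "pos_rel n b j = (\<lambda>k. if k = n + j then 1 else if k < n then int (b k j) else 0)"

end

theory Submission
  imports Defs
begin

lemma lattice_axis: "lattice_pt (axis j (1::real) :: real^'n)"
  unfolding lattice_pt_def axis_def by auto


lemma fan_facts:
  fixes v :: "nat \<Rightarrow> real^'n"
  assumes fan: "smooth_projective_fan Nr v M"
  shows "\<And>k. k < Nr \<Longrightarrow> \<exists>\<tau>\<in>M. k \<in> \<tau>"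
    and "\<And>\<sigma> \<tau>. \<sigma> \<in> M \<Longrightarrow> \<tau> \<in> M \<Longrightarrow> cone_of v \<sigma> \<inter> cone_of v \<tau> = cone_of v (\<sigma> \<inter> \<tau>)"
    and "\<And>y. \<exists>\<sigma>\<in>M. y \<in> cone_of v \<sigma>"
    and "\<And>\<sigma> y. \<sigma> \<in> M \<Longrightarrow> lattice_pt y \<Longrightarrow> \<exists>c::nat \<Rightarrow> int. y = (\<Sum>i\<in>\<sigma>. of_int (c i) *\<^sub>R v i)"
    and "\<And>k. k < Nr \<Longrightarrow> lattice_pt (v k)"
    and "\<exists>a'. ample Nr v M a'"
    and "M \<noteq> {}"
proof -
  note D = fan[unfolded smooth_projective_fan_def]
  have U: "\<Union>M = {..<Nr}" using D by (elim conjE) assumption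
  have C: "(\<Union>\<sigma>\<in>M. cone_of v \<sigma>) = UNIV" using D by (elim conjE) assumption
  have I: "\<forall>\<sigma>\<in>M. \<forall>\<tau>\<in>M. cone_of v \<sigma> \<inter> cone_of v \<tau> = cone_of v (\<sigma> \<inter> \<tau>)"
    using D by (elim conjE) assumption
  have S: "\<forall>\<sigma>\<in>M. \<sigma> \<subseteq> {..<Nr} \<and> card \<sigma> = CARD('n) \<and>
        (\<forall>x. lattice_pt x \<longrightarrow> (\<exists>c::nat \<Rightarrow> int. x = (\<Sum>i\<in>\<sigma>. of_int (c i) *\<^sub>R v i)))"
    using D by (elim conjE) assumption
  have L: "\<forall>k<Nr. lattice_pt (v k)" using D by (elim conjE) assumption
  have A: "\<exists>a'. ample Nr v M a'" using D by (elim conjE) assumption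
  have N: "M \<noteq> {}" using D by (elim conjE) assumption
  show "\<And>k. k < Nr \<Longrightarrow> \<exists>\<tau>\<in>M. k \<in> \<tau>" using U by blast
  show "\<And>y. \<exists>\<sigma>\<in>M. y \<in> cone_of v \<sigma>" using C by blast
  show "\<And>\<sigma> \<tau>. \<sigma> \<in> M \<Longrightarrow> \<tau> \<in> M \<Longrightarrow> cone_of v \<sigma> \<inter> cone_of v \<tau> = cone_of v (\<sigma> \<inter> \<tau>)"
    using I by blast
  show "\<And>\<sigma> y. \<sigma> \<in> M \<Longrightarrow> lattice_pt y \<Longrightarrow> \<exists>c::nat \<Rightarrow> int. y = (\<Sum>i\<in>\<sigma>. of_int (c i) *\<^sub>R v i)"
    using S by blast
  show "\<And>k. k < Nr \<Longrightarrow> lattice_pt (v k)" using L by blast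
  show "\<exists>a'. ample Nr v M a'" by (rule A)
  show "M \<noteq> {}" by (rule N)
qed

lemma fan_sigma:
  fixes v :: "nat \<Rightarrow> real^'n"
  assumes fan: "smooth_projective_fan Nr v M" and s: "\<sigma> \<in> M"
  shows "finite \<sigma>" "\<sigma> \<subseteq> {..<Nr}" "inj_on v \<sigma>" "span (v ` \<sigma>) = UNIV"
    "independent (v ` \<sigma>)" "card \<sigma> = CARD('n)"
proof -
  have sub: "\<sigma> \<subseteq> {..<Nr}" and cd: "card \<sigma> = CARD('n)"
    and gen: "\<forall>x. lattice_pt x \<longrightarrow> (\<exists>c::nat \<Rightarrow> int. x = (\<Sum>i\<in>\<sigma>. of_int (c i) *\<^sub>R v i))"
    using fan s unfolding smooth_projective_fan_def by auto
  show fin: "finite \<sigma>" using sub finite_subset by blast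
  show "\<sigma> \<subseteq> {..<Nr}" by fact
  show inj: "inj_on v \<sigma>" using fan sub unfolding smooth_projective_fan_def inj_on_def by blast
  show "card \<sigma> = CARD('n)" by fact
  have ax: "axis j 1 \<in> span (v ` \<sigma>)" for j :: 'n
  proof -
    obtain c :: "nat \<Rightarrow> int" where "axis j 1 = (\<Sum>i\<in>\<sigma>. of_int (c i) *\<^sub>R v i)"
      using gen lattice_axis by blast
    also have "\<dots> \<in> span (v ` \<sigma>)"
      by (intro span_sum span_scale span_base) auto
    finally show ?thesis .
  qed
  have "x \<in> span (v ` \<sigma>)" for x :: "real^'n"
  proof -
    have "x = (\<Sum>j\<in>UNIV. (x$j) *\<^sub>R axis j 1)"
      using basis_expansion[of x] by (simp add: scalar_mult_eq_scaleR)
    also have "\<dots> \<in> span (v ` \<sigma>)"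
      by (intro span_sum span_scale ax)
    finally show ?thesis .
  qed
  then show sp: "span (v ` \<sigma>) = UNIV" by auto
  show "independent (v ` \<sigma>)"
  proof (rule card_le_dim_spanning[of _ UNIV])
    show "v ` \<sigma> \<subseteq> UNIV" by simp
    show "UNIV \<subseteq> span (v ` \<sigma>)" using sp by simp
    show "finite (v ` \<sigma>)" using fin by simp
    show "card (v ` \<sigma>) \<le> dim (UNIV :: (real^'n) set)"
      using card_image[OF inj] cd by simp
  qed
qed

lemma indep_coeffs:
  fixes v :: "nat \<Rightarrow> real^'n"
  assumes fan: "smooth_projective_fan Nr v M" and s: "\<sigma> \<in> M"
    and z: "(\<Sum>k\<in>\<sigma>. c k *\<^sub>R v k) = 0" and k: "k \<in> \<sigma>"
  shows "c k = 0"
proof -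
  note F = fan_sigma[OF fan s]
  define u where "u x = c (the_inv_into \<sigma> v x)" for x
  have "(\<Sum>x\<in>v ` \<sigma>. u x *\<^sub>R x) = (\<Sum>k\<in>\<sigma>. u (v k) *\<^sub>R v k)"
    using sum.reindex[OF F(3)] by simp
  also have "\<dots> = (\<Sum>k\<in>\<sigma>. c k *\<^sub>R v k)"
    using the_inv_into_f_f[OF F(3)] unfolding u_def by simp
  finally have "(\<Sum>x\<in>v ` \<sigma>. u x *\<^sub>R x) = 0" using z by simp
  then have "u (v k) = 0" using F(5) k unfolding independent_explicit by blast
  then show ?thesis using the_inv_into_f_f[OF F(3) k] unfolding u_def by simp
qed

lemma inner_linear_rep:
  fixes f :: "real^'n \<Rightarrow> real"
  assumes "linear f"
  shows "inner (\<chi> j. f (axis j 1)) x = f x"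
proof -
  have "f x = f (\<Sum>j\<in>UNIV. (x$j) *\<^sub>R axis j 1)"
    using basis_expansion[of x] by (simp add: scalar_mult_eq_scaleR)
  also have "\<dots> = (\<Sum>j\<in>UNIV. f ((x$j) *\<^sub>R axis j 1))"
    by (rule linear_sum[OF assms])
  also have "\<dots> = (\<Sum>j\<in>UNIV. (x$j) * f (axis j 1))"
    by (simp add: linear_scale[OF assms])
  finally show ?thesis by (simp add: inner_vec_def mult.commute)
qed

lemma mD_prop:
  fixes v :: "nat \<Rightarrow> real^'n"
  assumes fan: "smooth_projective_fan Nr v M" and s: "\<sigma> \<in> M" and i: "i \<in> \<sigma>"
  shows "inner (mD v \<sigma> a) (v i) = - of_int (a i)"
proof -
  note F = fan_sigma[OF fan s]
  obtain g :: "real^'n \<Rightarrow> real" where g: "linear g" "\<forall>x\<in>v ` \<sigma>. g x = - of_int (a (the_inv_into \<sigma> v x))"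
    using linear_independent_extend[OF F(5), of "\<lambda>x. - of_int (a (the_inv_into \<sigma> v x)) :: real"]
    by (elim exE conjE) (rule that)
  define m where "m = (\<chi> j. g (axis j 1))"
  have m: "\<forall>i\<in>\<sigma>. inner m (v i) = - of_int (a i)"
  proof
    fix i assume i: "i \<in> \<sigma>"
    have "inner m (v i) = g (v i)" unfolding m_def by (rule inner_linear_rep[OF g(1)])
    also have "\<dots> = - of_int (a (the_inv_into \<sigma> v (v i)))" using g(2) i by blast
    also have "\<dots> = - of_int (a i)" using the_inv_into_f_f[OF F(3) i] by simp
    finally show "inner m (v i) = - of_int (a i)" .
  qed
  have uniq: "m' = m" if "\<forall>i\<in>\<sigma>. inner m' (v i) = - of_int (a i)" for m'
  proof -
    have "\<forall>x\<in>v ` \<sigma>. inner (m' - m) x = 0" using that m by (auto simp: inner_diff_left)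
    then have "\<forall>x\<in>span (v ` \<sigma>). inner (m' - m) x = 0"
      using linear_eq_0_on_span[OF bounded_linear.linear[OF bounded_linear_inner_right[of "m' - m"]]]
      by blast
    then have "inner (m' - m) (m' - m) = 0" using F(4) by blast
    then show ?thesis by simp
  qed
  have "mD v \<sigma> a = m"
    unfolding mD_def using m uniq by (intro the_equality) blast+
  then show ?thesis using m i by simp
qed


lemma sum_single:
  "finite S \<Longrightarrow> k \<in> S \<Longrightarrow> (\<Sum>i\<in>S. (if i = k then 1 else 0::real) *\<^sub>R (f i :: 'a::real_vector)) = f k"
proof -
  assume "finite S" "k \<in> S"
  have "(\<Sum>i\<in>S. (if i = k then 1 else 0::real) *\<^sub>R f i) = (\<Sum>i\<in>S. if i = k then f i else 0)"
    by (rule sum.cong) auto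
  then show ?thesis using \<open>finite S\<close> \<open>k \<in> S\<close> by simp
qed

lemma ray_in_cone:
  fixes v :: "nat \<Rightarrow> real^'n"
  assumes fan: "smooth_projective_fan Nr v M" and s: "\<sigma> \<in> M" and k: "k < Nr"
    and vk: "v k \<in> cone_of v \<sigma>"
  shows "k \<in> \<sigma>"
proof (rule ccontr)
  assume nk: "k \<notin> \<sigma>"
  obtain \<tau> where t: "\<tau> \<in> M" "k \<in> \<tau>"
    using fan_facts(1)[OF fan k] by blast
  have "v k \<in> cone_of v \<tau>"
    unfolding cone_of_def
  proof (intro CollectI exI conjI)
    show "\<forall>i\<in>\<tau>. (if i = k then 1 else 0::real) \<ge> 0" by simp
    show "v k = (\<Sum>i\<in>\<tau>. (if i = k then 1 else 0::real) *\<^sub>R v i)"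
      using fan_sigma(1)[OF fan t(1)] t(2) by (simp add: sum_single)
  qed
  with vk have "v k \<in> cone_of v (\<sigma> \<inter> \<tau>)"
    using fan_facts(2)[OF fan s t(1)] by blast
  then obtain c where c: "v k = (\<Sum>i\<in>\<sigma> \<inter> \<tau>. c i *\<^sub>R v i)"
    unfolding cone_of_def by blast
  define e where "e i = (if i = k then 1 else if i \<in> \<sigma> then - c i else 0)" for i
  have fin: "finite \<tau>" using fan_sigma(1)[OF fan t(1)] .
  have "(\<Sum>i\<in>\<tau>. e i *\<^sub>R v i) = v k + (\<Sum>i\<in>\<tau> - {k}. e i *\<^sub>R v i)"
    using t(2) fin by (simp add: sum.remove e_def)
  also have "(\<Sum>i\<in>\<tau> - {k}. e i *\<^sub>R v i) = (\<Sum>i\<in>\<sigma> \<inter> \<tau>. - c i *\<^sub>R v i)"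
  proof -
    have "(\<Sum>i\<in>\<tau> - {k}. e i *\<^sub>R v i) = (\<Sum>i\<in>\<sigma> \<inter> \<tau>. e i *\<^sub>R v i)"
      by (rule sum.mono_neutral_right) (use fin nk in \<open>auto simp: e_def\<close>)
    also have "\<dots> = (\<Sum>i\<in>\<sigma> \<inter> \<tau>. - c i *\<^sub>R v i)"
      by (rule sum.cong) (use nk in \<open>auto simp: e_def\<close>)
    finally show ?thesis .
  qed
  also have "\<dots> = - v k" using c by (simp add: sum_negf)
  finally have "(\<Sum>i\<in>\<tau>. e i *\<^sub>R v i) = 0" by simp
  then have "e k = 0" using indep_coeffs[OF fan t(1)] t(2) by blast
  then show False by (simp add: e_def)
qed

lemma phiD_ray:
  fixes v :: "nat \<Rightarrow> real^'n"
  assumes fan: "smooth_projective_fan Nr v M" and k: "k < Nr"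
  shows "phiD v M a (v k) = - of_int (a k)"
proof -
  obtain \<tau> where t: "\<tau> \<in> M" "k \<in> \<tau>"
    using fan_facts(1)[OF fan k] by blast
  have "v k \<in> cone_of v \<tau>"
    unfolding cone_of_def
  proof (intro CollectI exI conjI)
    show "\<forall>i\<in>\<tau>. (if i = k then 1 else 0::real) \<ge> 0" by simp
    show "v k = (\<Sum>i\<in>\<tau>. (if i = k then 1 else 0::real) *\<^sub>R v i)"
      using fan_sigma(1)[OF fan t(1)] t(2) by (simp add: sum_single)
  qed
  then have ex: "\<exists>\<sigma>. \<sigma> \<in> M \<and> v k \<in> cone_of v \<sigma>" using t by blast
  define \<sigma> where "\<sigma> = (SOME \<sigma>. \<sigma> \<in> M \<and> v k \<in> cone_of v \<sigma>)"
  have s: "\<sigma> \<in> M" "v k \<in> cone_of v \<sigma>"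
    using someI_ex[OF ex] unfolding \<sigma>_def by blast+
  have "k \<in> \<sigma>" by (rule ray_in_cone[OF fan s(1) k s(2)])
  then show ?thesis
    unfolding phiD_def \<sigma>_def[symmetric] using mD_prop[OF fan s(1)] by blast
qed

definition Dg :: "nat \<Rightarrow> (nat \<Rightarrow> int) \<Rightarrow> (nat \<Rightarrow> int) \<Rightarrow> int" where
  "Dg Nr a c = (\<Sum>k<Nr. c k * a k)"

lemma Ldeg_eq:
  fixes v :: "nat \<Rightarrow> real^'n"
  assumes fan: "smooth_projective_fan Nr v M"
  shows "Ldeg Nr v M a c = of_int (Dg Nr a c)"
  unfolding Ldeg_def Dg_def using phiD_ray[OF fan]
  by (simp add: sum_negf[symmetric])

lemma lattice_sum:
  assumes "\<And>k. k \<in> S \<Longrightarrow> lattice_pt (x k)"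
  shows "lattice_pt (\<Sum>k\<in>S. of_int (c k) *\<^sub>R (x k :: real^'n))"
  using assms unfolding lattice_pt_def
  by (auto intro!: Ints_sum Ints_mult simp: sum_component)

lemma lattice_decomp:
  fixes v :: "nat \<Rightarrow> real^'n"
  assumes fan: "smooth_projective_fan Nr v M" and y: "lattice_pt y"
  shows "\<exists>\<sigma>\<in>M. \<exists>d::nat \<Rightarrow> int. (\<forall>k. d k \<ge> 0) \<and> y = (\<Sum>k\<in>\<sigma>. of_int (d k) *\<^sub>R v k)"
proof -
  obtain \<sigma> where s: "\<sigma> \<in> M" "y \<in> cone_of v \<sigma>"
    using fan_facts(3)[OF fan] by blast
  then obtain c where c: "\<forall>i\<in>\<sigma>. c i \<ge> 0" "y = (\<Sum>i\<in>\<sigma>. c i *\<^sub>R v i)"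
    unfolding cone_of_def by blast
  obtain z :: "nat \<Rightarrow> int" where z: "y = (\<Sum>i\<in>\<sigma>. of_int (z i) *\<^sub>R v i)"
    using fan_facts(4)[OF fan s(1) y] by blast
  have "(\<Sum>i\<in>\<sigma>. (c i - of_int (z i)) *\<^sub>R v i) = 0"
    using c(2) z by (simp add: scaleR_diff_left sum_subtractf)
  then have eq: "i \<in> \<sigma> \<Longrightarrow> c i = of_int (z i)" for i
    using indep_coeffs[OF fan s(1)] by fastforce
  define d where "d i = (if i \<in> \<sigma> then z i else 0)" for i
  have "\<forall>k. d k \<ge> 0" using eq c(1) by (auto simp: d_def)
  moreover have "y = (\<Sum>k\<in>\<sigma>. of_int (d k) *\<^sub>R v k)"
    using z by (simp add: d_def)
  ultimately show ?thesis using s(1) by blast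
qed

definition face :: "nat set set \<Rightarrow> nat set \<Rightarrow> bool" where
  "face M S \<longleftrightarrow> (\<exists>\<sigma>\<in>M. S \<subseteq> \<sigma>)"

lemma generates_cone_iff:
  fixes v :: "nat \<Rightarrow> real^'n"
  assumes fan: "smooth_projective_fan Nr v M" and S: "S \<subseteq> {..<Nr}"
  shows "generates_cone v M S \<longleftrightarrow> face M S"
proof
  assume "face M S" then show "generates_cone v M S"
    unfolding face_def generates_cone_def by blast
next
  assume "generates_cone v M S"
  then obtain \<sigma> \<tau> where st: "\<sigma> \<in> M" "\<tau> \<subseteq> \<sigma>" "cone_of v S = cone_of v \<tau>"
    unfolding generates_cone_def by blast
  have finS: "finite S" using S finite_subset by blast
  have fins: "finite \<sigma>" using fan_sigma(1)[OF fan st(1)] .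
  have "k \<in> \<sigma>" if k: "k \<in> S" for k
  proof -
    have "v k \<in> cone_of v S"
      unfolding cone_of_def
    proof (intro CollectI exI conjI)
      show "\<forall>i\<in>S. (if i = k then 1 else 0::real) \<ge> 0" by simp
      show "v k = (\<Sum>i\<in>S. (if i = k then 1 else 0::real) *\<^sub>R v i)"
        using finS k by (simp add: sum_single)
    qed
    then obtain c where c: "\<forall>i\<in>\<tau>. c i \<ge> 0" "v k = (\<Sum>i\<in>\<tau>. c i *\<^sub>R v i)"
      using st(3) unfolding cone_of_def by blast
    define c' where "c' i = (if i \<in> \<tau> then c i else 0)" for i
    have "v k = (\<Sum>i\<in>\<sigma>. c' i *\<^sub>R v i)"
    proof -
      have "(\<Sum>i\<in>\<sigma>. c' i *\<^sub>R v i) = (\<Sum>i\<in>\<tau>. c' i *\<^sub>R v i)"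
        by (rule sum.mono_neutral_right) (use fins st(2) in \<open>auto simp: c'_def\<close>)
      then show ?thesis using c(2) by (simp add: c'_def)
    qed
    then have "v k \<in> cone_of v \<sigma>" unfolding cone_of_def using c(1)
      by (intro CollectI exI[of _ c']) (auto simp: c'_def)
    then show ?thesis using ray_in_cone[OF fan st(1)] S k by blast
  qed
  then show "face M S" unfolding face_def using st(1) by blast
qed


definition rel :: "nat \<Rightarrow> (nat \<Rightarrow> real^'n) \<Rightarrow> (nat \<Rightarrow> int) \<Rightarrow> bool" where
  "rel Nr v c \<longleftrightarrow> (\<Sum>k<Nr. of_int (c k) *\<^sub>R v k) = 0"

definition eff :: "nat \<Rightarrow> (nat \<Rightarrow> int) \<Rightarrow> bool" where
  "eff Nr c \<longleftrightarrow> (\<forall>k<Nr. c k \<ge> 0)"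

definition nz :: "nat \<Rightarrow> (nat \<Rightarrow> int) \<Rightarrow> bool" where
  "nz Nr c \<longleftrightarrow> (\<exists>k<Nr. c k \<noteq> 0)"

lemma rel_diff: "rel Nr v c \<Longrightarrow> rel Nr v e \<Longrightarrow> rel Nr v (\<lambda>k. c k - e k)"
  unfolding rel_def by (simp add: scaleR_diff_left sum_subtractf)

lemma rel_add: "rel Nr v c \<Longrightarrow> rel Nr v e \<Longrightarrow> rel Nr v (\<lambda>k. c k + e k)"
  unfolding rel_def by (simp add: scaleR_add_left sum.distrib)

lemma rel_scale: "rel Nr v c \<Longrightarrow> rel Nr v (\<lambda>k. t * c k)"
proof -
  assume "rel Nr v c"
  have "(\<Sum>k<Nr. of_int (t * c k) *\<^sub>R v k) = of_int t *\<^sub>R (\<Sum>k<Nr. of_int (c k) *\<^sub>R v k)"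
    by (simp add: scaleR_sum_right)
  then show ?thesis using \<open>rel Nr v c\<close> unfolding rel_def by simp
qed

lemma Dg_diff: "Dg Nr a (\<lambda>k. c k - e k) = Dg Nr a c - Dg Nr a e"
  unfolding Dg_def by (simp add: sum_subtractf left_diff_distrib)

lemma Dg_add: "Dg Nr a (\<lambda>k. c k + e k) = Dg Nr a c + Dg Nr a e"
  unfolding Dg_def by (simp add: sum.distrib distrib_right)

lemma Dg_scale: "Dg Nr a (\<lambda>k. t * c k) = t * Dg Nr a c"
  unfolding Dg_def by (simp add: sum_distrib_left mult.assoc)

lemma gg_D:
  assumes "globally_generated Nr v M a" "\<sigma> \<in> M" "k < Nr"
  shows "of_int (a k) + inner (mD v \<sigma> a) (v k) \<ge> 0"
proof -
  have "inner (mD v \<sigma> a) (v k) \<ge> - of_int (a k)"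
    using assms unfolding globally_generated_def by blast
  then show ?thesis by linarith
qed

lemma ample_D:
  assumes "ample Nr v M a" "\<sigma> \<in> M" "k < Nr" "k \<notin> \<sigma>"
  shows "of_int (a k) + inner (mD v \<sigma> a) (v k) > 0"
proof -
  have "inner (mD v \<sigma> a) (v k) > - of_int (a k)"
    using assms unfolding ample_def by blast
  then show ?thesis by linarith
qed

lemma ample_gg:
  fixes v :: "nat \<Rightarrow> real^'n"
  assumes fan: "smooth_projective_fan Nr v M" and am: "ample Nr v M a"
  shows "globally_generated Nr v M a"
  unfolding globally_generated_def
proof (intro ballI allI impI)
  fix \<sigma> k assume s: "\<sigma> \<in> M" and k: "k < Nr"
  show "inner (mD v \<sigma> a) (v k) \<ge> - of_int (a k)"
  proof (cases "k \<in> \<sigma>")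
    case True then show ?thesis using mD_prop[OF fan s] by simp
  next
    case False then show ?thesis using ample_D[OF am s k False] by linarith
  qed
qed

lemma deg_via_g:
  fixes v :: "nat \<Rightarrow> real^'n"
  assumes r: "rel Nr v c"
  shows "of_int (Dg Nr a c) = (\<Sum>k<Nr. of_int (c k) * (of_int (a k) + inner m (v k)))"
proof -
  have "(\<Sum>k<Nr. of_int (c k) * inner m (v k)) = inner m (\<Sum>k<Nr. of_int (c k) *\<^sub>R v k)"
    by (simp add: inner_sum_right)
  also have "\<dots> = 0" using r unfolding rel_def by simp
  finally have z: "(\<Sum>k<Nr. of_int (c k) * inner m (v k)) = 0" .
  have "(\<Sum>k<Nr. of_int (c k) * (of_int (a k) + inner m (v k)))
      = (\<Sum>k<Nr. of_int (c k) * of_int (a k)) + (\<Sum>k<Nr. of_int (c k) * inner m (v k))"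
    by (simp add: distrib_left sum.distrib)
  then show ?thesis using z unfolding Dg_def by simp
qed

lemma Z_gg:
  fixes v :: "nat \<Rightarrow> real^'n"
  assumes fan: "smooth_projective_fan Nr v M" and gg: "globally_generated Nr v M a"
    and s: "\<sigma> \<in> M" and r: "rel Nr v c" and pos: "\<forall>k<Nr. k \<notin> \<sigma> \<longrightarrow> c k \<ge> 0"
  shows "Dg Nr a c \<ge> 0"
proof -
  have "(\<Sum>k<Nr. of_int (c k) * (of_int (a k) + inner (mD v \<sigma> a) (v k))) \<ge> (0::real)"
  proof (rule sum_nonneg)
    fix k assume "k \<in> {..<Nr}"
    then have k: "k < Nr" by simp
    show "0 \<le> of_int (c k) * (of_int (a k) + inner (mD v \<sigma> a) (v k))"
    proof (cases "k \<in> \<sigma>")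
      case True then show ?thesis using mD_prop[OF fan s] by simp
    next
      case False
      then have "c k \<ge> 0" using pos k by blast
      moreover have "of_int (a k) + inner (mD v \<sigma> a) (v k) \<ge> 0"
        using gg_D[OF gg s k] .
      ultimately show ?thesis by simp
    qed
  qed
  then show ?thesis using deg_via_g[OF r, of a "mD v \<sigma> a"] by simp
qed

lemma rel_supp:
  fixes v :: "nat \<Rightarrow> real^'n"
  assumes fan: "smooth_projective_fan Nr v M" and s: "\<sigma> \<in> M" and r: "rel Nr v c"
    and z: "\<forall>k<Nr. k \<notin> \<sigma> \<longrightarrow> c k = 0"
  shows "\<forall>k<Nr. c k = 0"
proof -
  have sub: "\<sigma> \<subseteq> {..<Nr}" using fan_sigma(2)[OF fan s] .
  have "(\<Sum>k\<in>\<sigma>. of_int (c k) *\<^sub>R v k) = (\<Sum>k<Nr. of_int (c k) *\<^sub>R v k)"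
    by (rule sum.mono_neutral_left) (use sub z in auto)
  also have "\<dots> = 0" using r unfolding rel_def .
  finally have "(\<Sum>k\<in>\<sigma>. of_int (c k) *\<^sub>R v k) = 0" .
  then have "k \<in> \<sigma> \<Longrightarrow> (of_int (c k) :: real) = 0" for k
    using indep_coeffs[OF fan s, of "\<lambda>k. of_int (c k)"] by blast
  then show ?thesis using z by auto
qed

lemma Z_ample:
  fixes v :: "nat \<Rightarrow> real^'n"
  assumes fan: "smooth_projective_fan Nr v M" and am: "ample Nr v M a"
    and s: "\<sigma> \<in> M" and r: "rel Nr v c" and pos: "\<forall>k<Nr. k \<notin> \<sigma> \<longrightarrow> c k \<ge> 0"
    and nzc: "nz Nr c"
  shows "Dg Nr a c > 0"
proof -
  define g where "g k = of_int (a k) + inner (mD v \<sigma> a) (v k)" for k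
  define f where "f k = (of_int (c k) * g k :: real)" for k
  have ge: "Dg Nr a c \<ge> 0" by (rule Z_gg[OF fan ample_gg[OF fan am] s r pos])
  have g0: "k \<in> \<sigma> \<Longrightarrow> g k = 0" for k unfolding g_def using mD_prop[OF fan s] by simp
  have gpos: "k < Nr \<Longrightarrow> k \<notin> \<sigma> \<Longrightarrow> g k > 0" for k unfolding g_def using ample_D[OF am s] by blast
  have terms: "\<And>k. k \<in> {..<Nr} \<Longrightarrow> 0 \<le> f k"
  proof -
    fix k assume "k \<in> {..<Nr}"
    then have k: "k < Nr" by simp
    show "0 \<le> f k"
    proof (cases "k \<in> \<sigma>")
      case True then show ?thesis using g0 unfolding f_def by simp
    next
      case False
      then have "c k \<ge> 0" using pos k by blast
      then show ?thesis using gpos[OF k False] unfolding f_def by simp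
    qed
  qed
  have "Dg Nr a c \<noteq> 0"
  proof
    assume "Dg Nr a c = 0"
    then have "sum f {..<Nr} = 0"
      using deg_via_g[OF r, of a "mD v \<sigma> a"] unfolding f_def g_def by simp
    then have each: "\<forall>k\<in>{..<Nr}. f k = 0"
      using sum_nonneg_eq_0_iff[OF finite_lessThan[of Nr], of f] terms by blast
    have "\<forall>k<Nr. k \<notin> \<sigma> \<longrightarrow> c k = 0"
    proof (intro allI impI)
      fix k assume k: "k < Nr" and ns: "k \<notin> \<sigma>"
      have "f k = 0" using each k by simp
      then show "c k = 0" using gpos[OF k ns] unfolding f_def by simp
    qed
    then have "\<forall>k<Nr. c k = 0" by (rule rel_supp[OF fan s r])
    then show False using nzc unfolding nz_def by blast
  qed
  then show ?thesis using ge by simp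
qed

lemma min_nonface:
  "finite K \<Longrightarrow> \<not> face M K \<Longrightarrow> \<exists>P\<subseteq>K. \<not> face M P \<and> (\<forall>J. J \<subset> P \<longrightarrow> face M J)"
proof (induction K rule: finite_psubset_induct)
  case (psubset K)
  show ?case
  proof (cases "\<forall>J. J \<subset> K \<longrightarrow> face M J")
    case True then show ?thesis using psubset.prems by blast
  next
    case False
    then obtain J where J: "J \<subset> K" "\<not> face M J" by blast
    then obtain P where "P \<subseteq> J" "\<not> face M P" "\<forall>J. J \<subset> P \<longrightarrow> face M J"
      using psubset.IH by blast
    then show ?thesis using J(1) by blast
  qed
qed

lemma coll_rel_rel:
  assumes "P \<subseteq> {..<Nr}" "(\<Sum>i\<in>P. v i) = 0"
  shows "rel Nr v (coll_rel P)"
proof -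
  have "(\<Sum>k<Nr. of_int (coll_rel P k) *\<^sub>R v k) = (\<Sum>k\<in>P. of_int (coll_rel P k) *\<^sub>R v k)"
    by (rule sum.mono_neutral_right) (use assms in \<open>auto simp: coll_rel_def\<close>)
  also have "\<dots> = (\<Sum>k\<in>P. v k)" by (rule sum.cong) (auto simp: coll_rel_def)
  finally show ?thesis unfolding rel_def using assms(2) by simp
qed


lemma lattice_sum1:
  assumes "\<And>k. k \<in> S \<Longrightarrow> lattice_pt (x k)"
  shows "lattice_pt (\<Sum>k\<in>S. (x k :: real^'n))"
  using lattice_sum[of S x "\<lambda>_. 1"] assms by simp

lemma step:
  fixes v :: "nat \<Rightarrow> real^'n"
  assumes fan: "smooth_projective_fan Nr v M" and ef: "eff Nr c" and r: "rel Nr v c" and nzc: "nz Nr c"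
  shows "\<exists>P. primitive_collection Nr v M P \<and> (\<forall>k\<in>P. c k \<ge> 1) \<and>
     ((\<Sum>i\<in>P. v i) = 0 \<or>
      (\<exists>E \<sigma>. \<sigma> \<in> M \<and> rel Nr v E \<and> (\<forall>k<Nr. k \<notin> \<sigma> \<longrightarrow> E k \<ge> 0) \<and> nz Nr E \<and>
             eff Nr (\<lambda>k. c k - E k) \<and> nz Nr (\<lambda>k. c k - E k)))"
proof -
  define K where "K = {k. k < Nr \<and> c k \<noteq> 0}"
  have finK: "finite K" unfolding K_def by simp
  have KN: "K \<subseteq> {..<Nr}" unfolding K_def by auto
  have nfK: "\<not> face M K"
  proof
    assume "face M K"
    then obtain \<sigma> where s: "\<sigma> \<in> M" "K \<subseteq> \<sigma>" unfolding face_def by blast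
    have "\<forall>k<Nr. k \<notin> \<sigma> \<longrightarrow> c k = 0" using s(2) unfolding K_def by blast
    then have "\<forall>k<Nr. c k = 0" by (rule rel_supp[OF fan s(1) r])
    then show False using nzc unfolding nz_def by blast
  qed
  obtain P where P: "P \<subseteq> K" "\<not> face M P" "\<forall>J. J \<subset> P \<longrightarrow> face M J"
    using min_nonface[OF finK nfK] by blast
  have PN: "P \<subseteq> {..<Nr}" using P(1) KN by blast
  have prim: "primitive_collection Nr v M P"
    unfolding primitive_collection_def
  proof (intro conjI allI impI)
    show "P \<subseteq> {..<Nr}" by fact
    show "\<not> generates_cone v M P" using generates_cone_iff[OF fan PN] P(2) by blast
    fix J assume "J \<subset> P"
    then show "generates_cone v M J" using generates_cone_iff[OF fan, of J] P(3) PN by blast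
  qed
  have c1: "\<forall>k\<in>P. c k \<ge> 1"
  proof
    fix k assume "k \<in> P"
    then have "k < Nr" "c k \<noteq> 0" using P(1) unfolding K_def by auto
    moreover have "c k \<ge> 0" using ef \<open>k < Nr\<close> unfolding eff_def by blast
    ultimately show "c k \<ge> 1" by simp
  qed
  show ?thesis
  proof (cases "(\<Sum>i\<in>P. v i) = 0")
    case True then show ?thesis using prim c1 by blast
  next
    case False
    define y where "y = (\<Sum>i\<in>P. v i)"
    have "lattice_pt y" unfolding y_def
      by (rule lattice_sum1) (use PN fan_facts(5)[OF fan] in blast)
    then obtain \<sigma> and d :: "nat \<Rightarrow> int" where s: "\<sigma> \<in> M" and d0: "\<forall>k. d k \<ge> 0"
      and yd: "y = (\<Sum>k\<in>\<sigma>. of_int (d k) *\<^sub>R v k)"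
      using lattice_decomp[OF fan] by blast
    have sN: "\<sigma> \<subseteq> {..<Nr}" using fan_sigma(2)[OF fan s] .
    define d' where "d' k = (if k \<in> \<sigma> then d k else 0)" for k
    define E where "E k = coll_rel P k - d' k" for k
    have A: "(\<Sum>k<Nr. of_int (coll_rel P k) *\<^sub>R v k) = y"
    proof -
      have "(\<Sum>k<Nr. of_int (coll_rel P k) *\<^sub>R v k) = (\<Sum>k\<in>P. of_int (coll_rel P k) *\<^sub>R v k)"
        by (rule sum.mono_neutral_right) (use PN in \<open>auto simp: coll_rel_def\<close>)
      also have "\<dots> = (\<Sum>k\<in>P. v k)" by (rule sum.cong) (auto simp: coll_rel_def)
      finally show ?thesis unfolding y_def .
    qed
    have B: "(\<Sum>k<Nr. of_int (d' k) *\<^sub>R v k) = y"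
    proof -
      have "(\<Sum>k<Nr. of_int (d' k) *\<^sub>R v k) = (\<Sum>k\<in>\<sigma>. of_int (d' k) *\<^sub>R v k)"
        by (rule sum.mono_neutral_right) (use sN in \<open>auto simp: d'_def\<close>)
      also have "\<dots> = (\<Sum>k\<in>\<sigma>. of_int (d k) *\<^sub>R v k)" by (rule sum.cong) (auto simp: d'_def)
      finally show ?thesis using yd by simp
    qed
    have rE: "rel Nr v E"
      unfolding rel_def E_def using A B by (simp add: scaleR_diff_left sum_subtractf)
    have Epos: "\<forall>k<Nr. k \<notin> \<sigma> \<longrightarrow> E k \<ge> 0"
      unfolding E_def d'_def coll_rel_def by simp
    have nzE: "nz Nr E"
    proof -
      have "\<not> P \<subseteq> \<sigma>" using P(2) s unfolding face_def by blast
      then obtain k where k: "k \<in> P" "k \<notin> \<sigma>" by blast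
      then have "k < Nr" "E k = 1" using PN unfolding E_def d'_def coll_rel_def by auto
      then show ?thesis unfolding nz_def by force
    qed
    have efE: "eff Nr (\<lambda>k. c k - E k)"
      unfolding eff_def
    proof (intro allI impI)
      fix k assume k: "k < Nr"
      have "c k \<ge> 0" using ef k unfolding eff_def by blast
      moreover have "d' k \<ge> 0" using d0 unfolding d'_def by simp
      ultimately show "c k - E k \<ge> 0"
        using c1 unfolding E_def coll_rel_def by (cases "k \<in> P") auto
    qed
    have nzcE: "nz Nr (\<lambda>k. c k - E k)"
    proof (rule ccontr)
      assume "\<not> nz Nr (\<lambda>k. c k - E k)"
      then have z: "\<forall>k<Nr. c k - E k = 0" unfolding nz_def by blast
      have "d' k = 0" if k: "k < Nr" for k
      proof -
        have "c k \<ge> 0" using ef k unfolding eff_def by blast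
        moreover have "d' k \<ge> 0" using d0 unfolding d'_def by simp
        moreover have "c k - coll_rel P k + d' k = 0" using z k unfolding E_def by simp
        ultimately show ?thesis using c1 unfolding coll_rel_def by (cases "k \<in> P") auto
      qed
      then have "(\<Sum>k<Nr. of_int (d' k) *\<^sub>R v k) = 0" by simp
      then have "y = 0" using B by simp
      then show False using False unfolding y_def by simp
    qed
    show ?thesis using prim c1 s rE Epos nzE efE nzcE by blast
  qed
qed


lemma Dg_cong: "(\<forall>k<Nr. c k = e k) \<Longrightarrow> Dg Nr a c = Dg Nr a e"
  unfolding Dg_def by (rule sum.cong) auto

lemma lemB:
  fixes v :: "nat \<Rightarrow> real^'n" and \<beta> :: real
  assumes fan: "smooth_projective_fan Nr v M" and gg: "globally_generated Nr v M a"
    and bmin: "\<forall>I. centred_primitive_collection Nr v M I \<longrightarrow> \<beta> \<le> of_int (Dg Nr a (coll_rel I))"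
  shows "eff Nr c \<Longrightarrow> rel Nr v c \<Longrightarrow> nz Nr c \<Longrightarrow> \<beta> \<le> of_int (Dg Nr a c)"
proof -
  obtain a' where am: "ample Nr v M a'" using fan_facts(6)[OF fan] by blast
  obtain \<sigma>0 where s0: "\<sigma>0 \<in> M" using fan_facts(7)[OF fan] by blast
  have "\<forall>c. nat (Dg Nr a' c) = n \<longrightarrow> eff Nr c \<longrightarrow> rel Nr v c \<longrightarrow> nz Nr c \<longrightarrow> \<beta> \<le> of_int (Dg Nr a c)" for n
  proof (induction n rule: less_induct)
    case (less n)
    show ?case
    proof (intro allI impI)
      fix c assume n: "nat (Dg Nr a' c) = n" and ef: "eff Nr c" and r: "rel Nr v c" and nzc: "nz Nr c"
      obtain P where prim: "primitive_collection Nr v M P" and c1: "\<forall>k\<in>P. c k \<ge> 1"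
        and alt: "(\<Sum>i\<in>P. v i) = 0 \<or>
          (\<exists>E \<sigma>. \<sigma> \<in> M \<and> rel Nr v E \<and> (\<forall>k<Nr. k \<notin> \<sigma> \<longrightarrow> E k \<ge> 0) \<and> nz Nr E \<and>
             eff Nr (\<lambda>k. c k - E k) \<and> nz Nr (\<lambda>k. c k - E k))"
        using step[OF fan ef r nzc] by blast
      have PN: "P \<subseteq> {..<Nr}" using prim unfolding primitive_collection_def by blast
      show "\<beta> \<le> of_int (Dg Nr a c)"
      proof (cases "(\<Sum>i\<in>P. v i) = 0")
        case True
        have cpc: "centred_primitive_collection Nr v M P"
          unfolding centred_primitive_collection_def using prim True by blast
        have rP: "rel Nr v (coll_rel P)" by (rule coll_rel_rel[OF PN True])
        have "Dg Nr a (\<lambda>k. c k - coll_rel P k) \<ge> 0"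
        proof (rule Z_gg[OF fan gg s0 rel_diff[OF r rP]])
          show "\<forall>k<Nr. k \<notin> \<sigma>0 \<longrightarrow> 0 \<le> c k - coll_rel P k"
            using ef c1 unfolding eff_def coll_rel_def by auto
        qed
        then have "Dg Nr a c \<ge> Dg Nr a (coll_rel P)" using Dg_diff[of Nr a c "coll_rel P"] by simp
        then have "(of_int (Dg Nr a (coll_rel P)) :: real) \<le> of_int (Dg Nr a c)" by simp
        moreover have "\<beta> \<le> of_int (Dg Nr a (coll_rel P))" using bmin cpc by blast
        ultimately show ?thesis by linarith
      next
        case False
        then obtain E \<sigma> where s: "\<sigma> \<in> M" and rE: "rel Nr v E" and Ep: "\<forall>k<Nr. k \<notin> \<sigma> \<longrightarrow> E k \<ge> 0"
          and nzE: "nz Nr E" and ef': "eff Nr (\<lambda>k. c k - E k)" and nz': "nz Nr (\<lambda>k. c k - E k)"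
          using alt by blast
        have r': "rel Nr v (\<lambda>k. c k - E k)" by (rule rel_diff[OF r rE])
        have pos': "\<forall>k<Nr. k \<notin> \<sigma>0 \<longrightarrow> 0 \<le> c k - E k" using ef' unfolding eff_def by blast
        have "Dg Nr a' E > 0" by (rule Z_ample[OF fan am s rE Ep nzE])
        moreover have "Dg Nr a' (\<lambda>k. c k - E k) \<ge> 0"
          by (rule Z_gg[OF fan ample_gg[OF fan am] s0 r' pos'])
        ultimately have lt: "nat (Dg Nr a' (\<lambda>k. c k - E k)) < n"
          using n Dg_diff[of Nr a' c E] by simp
        have IH: "\<beta> \<le> of_int (Dg Nr a (\<lambda>k. c k - E k))"
          using less.IH[OF lt] ef' r' nz' by blast
        have "Dg Nr a E \<ge> 0" by (rule Z_gg[OF fan gg s rE Ep])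
        then show ?thesis using IH Dg_diff[of Nr a c E] by simp
      qed
    qed
  qed
  then show "eff Nr c \<Longrightarrow> rel Nr v c \<Longrightarrow> nz Nr c \<Longrightarrow> \<beta> \<le> of_int (Dg Nr a c)" by blast
qed

lemma lemB2:
  fixes v :: "nat \<Rightarrow> real^'n" and \<beta> :: real
  assumes fan: "smooth_projective_fan Nr v M" and am: "ample Nr v M a"
    and bmin: "\<forall>I. centred_primitive_collection Nr v M I \<longrightarrow> \<beta> \<le> of_int (Dg Nr a (coll_rel I))"
    and ef: "eff Nr c" and r: "rel Nr v c" and nzc: "nz Nr c" and le: "of_int (Dg Nr a c) \<le> \<beta>"
  shows "\<exists>I. centred_primitive_collection Nr v M I \<and> of_int (Dg Nr a (coll_rel I)) = \<beta> \<and>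
             (\<forall>k<Nr. c k = coll_rel I k)"
proof -
  have gg: "globally_generated Nr v M a" by (rule ample_gg[OF fan am])
  obtain \<sigma>0 where s0: "\<sigma>0 \<in> M" using fan_facts(7)[OF fan] by blast
  obtain P where prim: "primitive_collection Nr v M P" and c1: "\<forall>k\<in>P. c k \<ge> 1"
    and alt: "(\<Sum>i\<in>P. v i) = 0 \<or>
      (\<exists>E \<sigma>. \<sigma> \<in> M \<and> rel Nr v E \<and> (\<forall>k<Nr. k \<notin> \<sigma> \<longrightarrow> E k \<ge> 0) \<and> nz Nr E \<and>
         eff Nr (\<lambda>k. c k - E k) \<and> nz Nr (\<lambda>k. c k - E k))"
    using step[OF fan ef r nzc] by blast
  have PN: "P \<subseteq> {..<Nr}" using prim unfolding primitive_collection_def by blast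
  show ?thesis
  proof (cases "(\<Sum>i\<in>P. v i) = 0")
    case True
    have cpc: "centred_primitive_collection Nr v M P"
      unfolding centred_primitive_collection_def using prim True by blast
    have rP: "rel Nr v (coll_rel P)" by (rule coll_rel_rel[OF PN True])
    have bP: "\<beta> \<le> of_int (Dg Nr a (coll_rel P))" using bmin cpc by blast
    have pos: "\<forall>k<Nr. k \<notin> \<sigma>0 \<longrightarrow> 0 \<le> c k - coll_rel P k"
      using ef c1 unfolding eff_def coll_rel_def by auto
    have "\<not> nz Nr (\<lambda>k. c k - coll_rel P k)"
    proof
      assume "nz Nr (\<lambda>k. c k - coll_rel P k)"
      then have "Dg Nr a (\<lambda>k. c k - coll_rel P k) > 0"
        by (rule Z_ample[OF fan am s0 rel_diff[OF r rP] pos])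
      then have "Dg Nr a c > Dg Nr a (coll_rel P)" using Dg_diff[of Nr a c "coll_rel P"] by simp
      then have "(of_int (Dg Nr a (coll_rel P)) :: real) < of_int (Dg Nr a c)" by simp
      then show False using bP le by linarith
    qed
    then have eq: "\<forall>k<Nr. c k = coll_rel P k" unfolding nz_def by auto
    then have "Dg Nr a c = Dg Nr a (coll_rel P)" by (rule Dg_cong)
    then have "of_int (Dg Nr a (coll_rel P)) = \<beta>" using bP le by simp
    then show ?thesis using cpc eq by blast
  next
    case False
    then obtain E \<sigma> where s: "\<sigma> \<in> M" and rE: "rel Nr v E" and Ep: "\<forall>k<Nr. k \<notin> \<sigma> \<longrightarrow> E k \<ge> 0"
      and nzE: "nz Nr E" and ef': "eff Nr (\<lambda>k. c k - E k)" and nz': "nz Nr (\<lambda>k. c k - E k)"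
      using alt by blast
    have r': "rel Nr v (\<lambda>k. c k - E k)" by (rule rel_diff[OF r rE])
    have "\<beta> \<le> of_int (Dg Nr a (\<lambda>k. c k - E k))" by (rule lemB[OF fan gg bmin ef' r' nz'])
    moreover have "Dg Nr a E > 0" by (rule Z_ample[OF fan am s rE Ep nzE])
    ultimately have "\<beta> < of_int (Dg Nr a c)" using Dg_diff[of Nr a c E] by simp
    then show ?thesis using le by simp
  qed
qed


lemma pos_rel_facts:
  fixes v :: "nat \<Rightarrow> real^'n"
  assumes jj: "jj < r"
    and rl: "v (N + jj) + (\<Sum>i<N. real (b i jj) *\<^sub>R v i) = 0"
  shows "rel (N + r) v (pos_rel N b jj)"
    and "eff (N + r) (pos_rel N b jj)"
    and "nz (N + r) (pos_rel N b jj)"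
    and "pos_rel N b jj (N + jj) = 1"
    and "\<And>i. i < N \<Longrightarrow> pos_rel N b jj i = int (b i jj)"
    and "Dg (N + r) a (pos_rel N b jj) = a (N + jj) + (\<Sum>i<N. a i * int (b i jj))"
proof -
  let ?P = "pos_rel N b jj"
  have S: "insert (N + jj) {..<N} \<subseteq> {..<N + r}" using jj by auto
  have nin: "N + jj \<notin> {..<N}" by simp
  have gen: "(\<Sum>k<N + r. F (?P k) k) = F 1 (N + jj) + (\<Sum>k<N. F (int (b k jj)) k)"
    if F0: "\<And>k. F 0 k = 0" for F :: "int \<Rightarrow> nat \<Rightarrow> 'b::comm_monoid_add"
  proof -
    have "(\<Sum>k<N + r. F (?P k) k) = (\<Sum>k\<in>insert (N + jj) {..<N}. F (?P k) k)"
      by (rule sum.mono_neutral_right) (use S F0 in \<open>auto simp: pos_rel_def\<close>)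
    also have "\<dots> = F (?P (N + jj)) (N + jj) + (\<Sum>k<N. F (?P k) k)"
      using nin by (simp add: sum.insert)
    also have "(\<Sum>k<N. F (?P k) k) = (\<Sum>k<N. F (int (b k jj)) k)"
      by (rule sum.cong) (auto simp: pos_rel_def)
    finally show ?thesis by (simp add: pos_rel_def)
  qed
  have "(\<Sum>k<N + r. of_int (?P k) *\<^sub>R v k) = of_int 1 *\<^sub>R v (N + jj) + (\<Sum>k<N. of_int (int (b k jj)) *\<^sub>R v k)"
    by (rule gen[of "\<lambda>x k. of_int x *\<^sub>R v k"]) simp
  then show "rel (N + r) v ?P" unfolding rel_def using rl by simp
  show "eff (N + r) ?P" unfolding eff_def pos_rel_def by simp
  show "?P (N + jj) = 1" unfolding pos_rel_def by simp
  then show "nz (N + r) ?P" unfolding nz_def using jj by (intro exI[of _ "N + jj"]) simp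
  show "\<And>i. i < N \<Longrightarrow> ?P i = int (b i jj)" unfolding pos_rel_def by simp
  have "Dg (N + r) a ?P = 1 * a (N + jj) + (\<Sum>k<N. int (b k jj) * a k)"
    unfolding Dg_def by (rule gen[of "\<lambda>x k. x * a k"]) simp
  then show "Dg (N + r) a ?P = a (N + jj) + (\<Sum>i<N. a i * int (b i jj))"
    by (simp add: mult.commute)
qed


lemma core:
  fixes v :: "nat \<Rightarrow> real^'n" and \<beta> :: real
  assumes fan: "smooth_projective_fan (N + r) v M"
    and s0: "{..<N} \<in> M"
    and rl: "v (N + j0) + (\<Sum>i<N. real (b i j0) *\<^sub>R v i) = 0"
    and gg: "globally_generated (N + r) v M a"
    and bmin: "\<forall>I. centred_primitive_collection (N + r) v M I \<longrightarrow> \<beta> \<le> of_int (Dg (N + r) a (coll_rel I))"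
    and i0: "i0 < N" and j0: "j0 < r"
  shows "of_int (Dg (N + r) a (pos_rel N b j0)) \<ge> real (b i0 j0) * \<beta>"
    and "ample (N + r) v M a \<Longrightarrow>
         (\<forall>I. centred_primitive_collection (N + r) v M I \<and> of_int (Dg (N + r) a (coll_rel I)) = \<beta> \<longrightarrow> i0 \<notin> I) \<Longrightarrow>
         of_int (Dg (N + r) a (pos_rel N b j0)) > real (b i0 j0) * \<beta>"
    and "ample (N + r) v M a \<Longrightarrow>
         (\<forall>I. centred_primitive_collection (N + r) v M I \<and> of_int (Dg (N + r) a (coll_rel I)) = \<beta> \<longrightarrow> N + j0 \<notin> I) \<Longrightarrow>
         of_int (Dg (N + r) a (pos_rel N b j0)) > real (b i0 j0) * \<beta>"
proof -
  let ?Nr = "N + r"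
  let ?P = "pos_rel N b j0"
  let ?b = "b i0 j0"
  note PF = pos_rel_facts[where jj=j0 and r=r and v=v and N=N and b=b, OF j0 rl]
  have i0N: "i0 < ?Nr" using i0 by simp
  have "lattice_pt (- v i0)"
    using fan_facts(5)[OF fan i0N] unfolding lattice_pt_def by (simp add: Ints_minus)
  then obtain \<tau> and d :: "nat \<Rightarrow> int" where t: "\<tau> \<in> M" and d0: "\<forall>k. d k \<ge> 0"
    and vd: "- v i0 = (\<Sum>k\<in>\<tau>. of_int (d k) *\<^sub>R v k)"
    using lattice_decomp[OF fan] by blast
  have tN: "\<tau> \<subseteq> {..<?Nr}" using fan_sigma(2)[OF fan t] .
  define d' where "d' k = (if k \<in> \<tau> then d k else 0)" for k
  define R where "R k = coll_rel {i0} k + d' k" for k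
  have A: "(\<Sum>k<?Nr. of_int (coll_rel {i0} k) *\<^sub>R v k) = v i0"
  proof -
    have "(\<Sum>k<?Nr. of_int (coll_rel {i0} k) *\<^sub>R v k) = (\<Sum>k\<in>{i0}. of_int (coll_rel {i0} k) *\<^sub>R v k)"
      by (rule sum.mono_neutral_right) (use i0N in \<open>auto simp: coll_rel_def\<close>)
    then show ?thesis by (simp add: coll_rel_def)
  qed
  have B: "(\<Sum>k<?Nr. of_int (d' k) *\<^sub>R v k) = - v i0"
  proof -
    have "(\<Sum>k<?Nr. of_int (d' k) *\<^sub>R v k) = (\<Sum>k\<in>\<tau>. of_int (d' k) *\<^sub>R v k)"
      by (rule sum.mono_neutral_right) (use tN in \<open>auto simp: d'_def\<close>)
    also have "\<dots> = (\<Sum>k\<in>\<tau>. of_int (d k) *\<^sub>R v k)" by (rule sum.cong) (auto simp: d'_def)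
    finally show ?thesis using vd by simp
  qed
  have rR: "rel ?Nr v R"
    unfolding rel_def R_def using A B by (simp add: scaleR_add_left sum.distrib)
  have Ri0: "R i0 \<ge> 1" using d0 unfolding R_def d'_def coll_rel_def by simp
  have efR: "eff ?Nr R" using d0 unfolding eff_def R_def d'_def coll_rel_def by simp
  have nzR: "nz ?Nr R" unfolding nz_def using Ri0 i0N by (intro exI[of _ i0]) simp
  define E where "E k = ?P k - int ?b * R k" for k
  have rE: "rel ?Nr v E" unfolding E_def by (rule rel_diff[OF PF(1) rel_scale[OF rR]])
  have Ep: "\<forall>k<?Nr. k \<notin> \<tau> \<longrightarrow> E k \<ge> 0"
  proof (intro allI impI)
    fix k assume k: "k < ?Nr" and kt: "k \<notin> \<tau>"
    show "E k \<ge> 0"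
    proof (cases "k = i0")
      case True then show ?thesis using PF(5)[OF i0] kt unfolding E_def R_def d'_def coll_rel_def by simp
    next
      case False
      have "?P k \<ge> 0" using PF(2) k unfolding eff_def by blast
      then show ?thesis using False kt unfolding E_def R_def d'_def coll_rel_def by simp
    qed
  qed
  have DPE: "Dg ?Nr a ?P = int ?b * Dg ?Nr a R + Dg ?Nr a E"
    unfolding E_def using Dg_diff[of ?Nr a ?P "\<lambda>k. int ?b * R k"] Dg_scale[of ?Nr a "int ?b" R] by simp
  have DR: "\<beta> \<le> of_int (Dg ?Nr a R)" by (rule lemB[OF fan gg bmin efR rR nzR])
  have DE: "Dg ?Nr a E \<ge> 0" by (rule Z_gg[OF fan gg t rE Ep])
  have main: "real ?b * of_int (Dg ?Nr a R) \<le> of_int (Dg ?Nr a ?P)"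
    using DPE DE by simp
  have bb: "real ?b * \<beta> \<le> real ?b * of_int (Dg ?Nr a R)"
    using DR by (simp add: mult_left_mono)
  show "of_int (Dg ?Nr a ?P) \<ge> real ?b * \<beta>" using main bb by linarith
  have b0: "of_int (Dg ?Nr a ?P) > real ?b * \<beta>" if am: "ample ?Nr v M a" and bz: "?b = 0"
  proof -
    have "Dg ?Nr a ?P > 0"
      by (rule Z_ample[OF fan am s0 PF(1) _ PF(3)]) (use PF(2) in \<open>auto simp: eff_def\<close>)
    then show ?thesis using bz by simp
  qed
  show "of_int (Dg ?Nr a ?P) > real ?b * \<beta>"
    if am: "ample ?Nr v M a"
      and hyp: "\<forall>I. centred_primitive_collection ?Nr v M I \<and> of_int (Dg ?Nr a (coll_rel I)) = \<beta> \<longrightarrow> i0 \<notin> I"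
  proof (cases "?b = 0")
    case True then show ?thesis using b0[OF am] by blast
  next
    case False
    have "\<beta> < of_int (Dg ?Nr a R)"
    proof (rule ccontr)
      assume "\<not> \<beta> < of_int (Dg ?Nr a R)"
      then have "of_int (Dg ?Nr a R) \<le> \<beta>" by simp
      then obtain I where I: "centred_primitive_collection ?Nr v M I" "of_int (Dg ?Nr a (coll_rel I)) = \<beta>"
        "\<forall>k<?Nr. R k = coll_rel I k"
        using lemB2[OF fan am bmin efR rR nzR] by blast
      have "coll_rel I i0 \<ge> 1" using I(3) i0N Ri0 by metis
      then have "i0 \<in> I" unfolding coll_rel_def by (cases "i0 \<in> I") auto
      then show False using hyp I(1,2) by blast
    qed
    then have "real ?b * \<beta> < real ?b * of_int (Dg ?Nr a R)" using False by simp
    then show ?thesis using main by linarith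
  qed
  show "of_int (Dg ?Nr a ?P) > real ?b * \<beta>"
    if am: "ample ?Nr v M a"
      and hyp: "\<forall>I. centred_primitive_collection ?Nr v M I \<and> of_int (Dg ?Nr a (coll_rel I)) = \<beta> \<longrightarrow> N + j0 \<notin> I"
  proof (cases "?b = 0")
    case True then show ?thesis using b0[OF am] by blast
  next
    case False
    show ?thesis
    proof (rule ccontr)
      assume "\<not> real ?b * \<beta> < of_int (Dg ?Nr a ?P)"
      then have le: "of_int (Dg ?Nr a ?P) \<le> real ?b * \<beta>" by simp
      then have "real ?b * of_int (Dg ?Nr a R) \<le> real ?b * \<beta>" using main by linarith
      then have "of_int (Dg ?Nr a R) \<le> \<beta>" using False by simp
      then obtain I where I: "centred_primitive_collection ?Nr v M I" "of_int (Dg ?Nr a (coll_rel I)) = \<beta>"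
        "\<forall>k<?Nr. R k = coll_rel I k"
        using lemB2[OF fan am bmin efR rR nzR] by blast
      have nI: "N + j0 \<notin> I" using hyp I(1,2) by blast
      have "Dg ?Nr a R = Dg ?Nr a (coll_rel I)" using I(3) by (rule Dg_cong)
      then have "of_int (Dg ?Nr a R) = \<beta>" using I(2) by simp
      then have "(of_int (Dg ?Nr a E) :: real) \<le> 0" using DPE le by simp
      then have "\<not> nz ?Nr E" using Z_ample[OF fan am t rE Ep] by fastforce
      moreover have "E (N + j0) = 1"
      proof -
        have "N + j0 < ?Nr" using j0 by simp
        then have "R (N + j0) = 0" using I(3) nI unfolding coll_rel_def by simp
        then show ?thesis unfolding E_def using PF(4) by simp
      qed
      ultimately show False using j0 unfolding nz_def by force
    qed
  qed
qed

theorem proposition6p6: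
  fixes v :: "nat \<Rightarrow> real^'n" and M :: "nat set set" and r :: nat
    and b :: "nat \<Rightarrow> nat \<Rightarrow> nat" and a :: "nat \<Rightarrow> int" and \<beta> :: real
  assumes fan: "smooth_projective_fan (CARD('n) + r) v M"
    and sigma0: "{..<CARD('n)} \<in> M"
    and rel: "\<forall>j<r. v (CARD('n) + j) + (\<Sum>i<CARD('n). real (b i j) *\<^sub>R v i) = 0"
    and gg: "globally_generated (CARD('n) + r) v M a"
    and beta_attained: "\<exists>I. centred_primitive_collection (CARD('n) + r) v M I \<and>
                             Ldeg (CARD('n) + r) v M a (coll_rel I) = \<beta>"
    and beta_min: "\<forall>I. centred_primitive_collection (CARD('n) + r) v M I \<longrightarrow>
                             \<beta> \<le> Ldeg (CARD('n) + r) v M a (coll_rel I)"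
  shows "(\<forall>i0<CARD('n). \<forall>j0<r.
            Ldeg (CARD('n) + r) v M a (pos_rel (CARD('n)) b j0)
              = of_int (a (CARD('n) + j0)) + (\<Sum>i<CARD('n). of_int (a i) * real (b i j0))
          \<and> Ldeg (CARD('n) + r) v M a (pos_rel (CARD('n)) b j0) \<ge> real (b i0 j0) * \<beta>)
       \<and> (ample (CARD('n) + r) v M a \<longrightarrow>
           (\<forall>i0<CARD('n).
              (\<forall>I. centred_primitive_collection (CARD('n) + r) v M I \<and>
                   Ldeg (CARD('n) + r) v M a (coll_rel I) = \<beta> \<longrightarrow> i0 \<notin> I) \<longrightarrow>
              (\<forall>j0<r. Ldeg (CARD('n) + r) v M a (pos_rel (CARD('n)) b j0) > real (b i0 j0) * \<beta>)))
       \<and> (ample (CARD('n) + r) v M a \<longrightarrow>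
           (\<forall>j0<r.
              (\<forall>I. centred_primitive_collection (CARD('n) + r) v M I \<and>
                   Ldeg (CARD('n) + r) v M a (coll_rel I) = \<beta> \<longrightarrow> CARD('n) + j0 \<notin> I) \<longrightarrow>
              (\<forall>i0<CARD('n). Ldeg (CARD('n) + r) v M a (pos_rel (CARD('n)) b j0) > real (b i0 j0) * \<beta>)))"
proof -
  let ?N = "CARD('n)"
  have LD: "\<And>c. Ldeg (?N + r) v M a c = of_int (Dg (?N + r) a c)" by (rule Ldeg_eq[OF fan])
  have bmin: "\<forall>I. centred_primitive_collection (?N + r) v M I \<longrightarrow> \<beta> \<le> of_int (Dg (?N + r) a (coll_rel I))"
    using beta_min LD by simp
  have C1: "of_int (Dg (?N + r) a (pos_rel ?N b j0)) \<ge> real (b i0 j0) * \<beta>"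
    if "i0 < ?N" "j0 < r" for i0 j0
    using core(1)[where N="CARD('n)" and r=r and v=v and M=M and b=b and a=a, OF fan sigma0 _ gg bmin that] rel that(2) by blast
  have EQ: "Ldeg (?N + r) v M a (pos_rel ?N b j0)
              = of_int (a (?N + j0)) + (\<Sum>i<?N. of_int (a i) * real (b i j0))"
    if "j0 < r" for j0
  proof -
    have rl: "v (?N + j0) + (\<Sum>i<?N. real (b i j0) *\<^sub>R v i) = 0" using rel that by blast
    have "Dg (?N + r) a (pos_rel ?N b j0) = a (?N + j0) + (\<Sum>i<?N. a i * int (b i j0))"
      by (rule pos_rel_facts(6)[where jj=j0 and r=r and v=v and N="CARD('n)" and b=b, OF that rl])
    then show ?thesis using LD by simp
  qed
  show ?thesis
  proof (intro conjI allI impI)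
    fix i0 j0 assume "i0 < ?N" "j0 < r"
    then show "Ldeg (?N + r) v M a (pos_rel ?N b j0)
              = of_int (a (?N + j0)) + (\<Sum>i<?N. of_int (a i) * real (b i j0))"
      and "Ldeg (?N + r) v M a (pos_rel ?N b j0) \<ge> real (b i0 j0) * \<beta>"
      using EQ C1 LD by auto
  next
    fix i0 j0 assume am: "ample (?N + r) v M a" and i0: "i0 < ?N"
      and hyp: "\<forall>I. centred_primitive_collection (?N + r) v M I \<and>
                   Ldeg (?N + r) v M a (coll_rel I) = \<beta> \<longrightarrow> i0 \<notin> I"
      and j0: "j0 < r"
    have hyp': "\<forall>I. centred_primitive_collection (?N + r) v M I \<and>
                   of_int (Dg (?N + r) a (coll_rel I)) = \<beta> \<longrightarrow> i0 \<notin> I"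
      using hyp LD by simp
    have rl: "v (?N + j0) + (\<Sum>i<?N. real (b i j0) *\<^sub>R v i) = 0" using rel j0 by blast
    show "Ldeg (?N + r) v M a (pos_rel ?N b j0) > real (b i0 j0) * \<beta>"
      using core(2)[where N="CARD('n)" and r=r and v=v and M=M and b=b and a=a, OF fan sigma0 rl gg bmin i0 j0 am hyp'] LD by simp
  next
    fix j0 i0 assume am: "ample (?N + r) v M a" and j0: "j0 < r"
      and hyp: "\<forall>I. centred_primitive_collection (?N + r) v M I \<and>
                   Ldeg (?N + r) v M a (coll_rel I) = \<beta> \<longrightarrow> ?N + j0 \<notin> I"
      and i0: "i0 < ?N"
    have hyp': "\<forall>I. centred_primitive_collection (?N + r) v M I \<and>
                   of_int (Dg (?N + r) a (coll_rel I)) = \<beta> \<longrightarrow> ?N + j0 \<notin> I"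
      using hyp LD by simp
    have rl: "v (?N + j0) + (\<Sum>i<?N. real (b i j0) *\<^sub>R v i) = 0" using rel j0 by blast
    show "Ldeg (?N + r) v M a (pos_rel ?N b j0) > real (b i0 j0) * \<beta>"
      using core(3)[where N="CARD('n)" and r=r and v=v and M=M and b=b and a=a, OF fan sigma0 rl gg bmin i0 j0 am hyp'] LD by simp
  qed
qed

end
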